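(* Let $A$ be a random variable with $\mathbb P(A>0)=1$ and law $\rho$. If $\mu$ is a solution of equation (2) for $\rho$ and $\eta\sim\mu$ satisfies $\mathbb E\eta^{p+1}<\infty$ for some $p>0$, then $\mathbb E A^p<1$.
   Context: For a probability measure $\nu$ on $[0,\infty)$ with mean $m\in(0,\infty)$, its size-biased distribution is $\nu_{sb}(dx)=m^{-1}x\,\nu(dx)$. A probability measure $\mu$ on $[0,\infty)$ with mean in $(0,\infty)$ is a solution of equation (2) for $\rho$ if $\eta_{sb}\overset{d}{=}A\eta_{sb}+\eta$, where $\eta\sim\mu$, $\eta_{sb}\sim\mu_{sb}$ and $A\sim\rho$ are mutually independent. *)

theory Defs
  imports "HOL-Probability.Probability"
begin

definition mean_nn :: "real measure \<Rightarrow> ennreal" where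
  "mean_nn \<mu> = (\<integral>\<^sup>+ x. ennreal x \<partial>\<mu>)"

definition size_biased :: "real measure \<Rightarrow> real measure" where
  "size_biased \<mu> = density \<mu> (\<lambda>x. ennreal x / mean_nn \<mu>)"

definition prob_on_nonneg :: "real measure \<Rightarrow> bool" where
  "prob_on_nonneg \<mu> \<longleftrightarrow> prob_space \<mu> \<and> sets \<mu> = sets borel \<and> (AE x in \<mu>. 0 \<le> x)"

text \<open>mu solves equation (2) for rho: eta_sb =d A eta_sb + eta with A ~ rho,
  eta_sb ~ mu_sb, eta ~ mu independent, i.e. the image of the product measure
  under (a,x,y) |-> a*x+y is mu_sb.\<close>
definition solves_eq2 :: "real measure \<Rightarrow> real measure \<Rightarrow> bool" where
  "solves_eq2 \<rho> \<mu> \<longleftrightarrow> prob_on_nonneg \<mu> \<and> 0 < mean_nn \<mu> \<and> mean_nn \<mu> < \<infinity> \<and>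
     distr (\<rho> \<Otimes>\<^sub>M (size_biased \<mu> \<Otimes>\<^sub>M \<mu>)) borel (\<lambda>(a, x, y). a * x + y)
       = size_biased \<mu>"

end

theory Submission imports Defs begin

lemma pw_split:
  fixes a x y p :: real
  assumes "0 < a" "0 \<le> x" "0 \<le> y" "0 < p"
  shows "ennreal ((a * x + y) powr p) = ennreal (a powr p) * ennreal (x powr p) + ennreal ((a * x + y) powr p - (a * x) powr p)"
proof -
  have ax: "(a * x) powr p = a powr p * x powr p" using assms by (simp add: powr_mult)
  have le: "(a * x) powr p \<le> (a * x + y) powr p" using assms by (intro powr_mono2) auto
  have "ennreal (a powr p) * ennreal (x powr p) = ennreal ((a * x) powr p)"
    using ax by (simp add: ennreal_mult)
  moreover have "ennreal ((a * x) powr p) + ennreal ((a * x + y) powr p - (a * x) powr p) = ennreal ((a * x + y) powr p)"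
    using le by (subst ennreal_plus[symmetric]) auto
  ultimately show ?thesis by simp
qed

lemma pw_pos:
  fixes a x y p :: real
  assumes "0 < a" "0 \<le> x" "0 < y" "0 < p"
  shows "0 < (a * x + y) powr p - (a * x) powr p"
  using assms by (simp add: powr_less_mono2)

lemma ennreal_final:
  fixes c E G :: ennreal
  assumes "c = E * c + G" "c < \<infinity>" "0 < G"
  shows "E < 1"
proof (rule ccontr)
  assume "\<not> E < 1"
  then have "c \<le> E * c" by (metis mult_1 mult_right_mono not_less zero_le)
  then have "c + G \<le> c" using assms(1) by (metis add_right_mono)
  then show False using assms(2,3) by (metis ennreal_add_left_cancel_le add_0_right less_top not_le)
qed

theorem proposition1p2:
  fixes \<rho> \<mu> :: "real measure" and p :: real
  assumes "prob_space \<rho>" and "sets \<rho> = sets borel" and "AE a in \<rho>. 0 < a"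
    and "solves_eq2 \<rho> \<mu>"
    and "p > 0"
    and "(\<integral>\<^sup>+ x. ennreal (x powr (p + 1)) \<partial>\<mu>) < \<infinity>"
  shows "(\<integral>\<^sup>+ a. ennreal (a powr p) \<partial>\<rho>) < 1"
proof -
  define \<nu> where "\<nu> = size_biased \<mu>"
  define m where "m = mean_nn \<mu>"
  have Pmu: "prob_space \<mu>" and smu: "sets \<mu> = sets borel" and AEmu: "AE x in \<mu>. 0 \<le> x"
    and m0: "0 < m" and mfin: "m < \<infinity>"
    and eq: "distr (\<rho> \<Otimes>\<^sub>M (\<nu> \<Otimes>\<^sub>M \<mu>)) borel (\<lambda>(a, x, y). a * x + y) = \<nu>"
    using assms(4) unfolding solves_eq2_def prob_on_nonneg_def \<nu>_def m_def by auto
  have snu: "sets \<nu> = sets borel" unfolding \<nu>_def size_biased_def using smu by simp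
  have mmu: "measurable \<mu> N = measurable borel N" for N using measurable_cong_sets[OF smu refl] .
  have mnu: "measurable \<nu> N = measurable borel N" for N using measurable_cong_sets[OF snu refl] .
  have mrho: "measurable \<rho> N = measurable borel N" for N using measurable_cong_sets[OF assms(2) refl] .
  have dens_meas: "(\<lambda>x. ennreal x / m) \<in> borel_measurable \<mu>" unfolding mmu by measurable
  have Pnu: "prob_space \<nu>"
  proof
    have "emeasure \<nu> (space \<nu>) = (\<integral>\<^sup>+x. ennreal x / m \<partial>\<mu>)"
      unfolding \<nu>_def size_biased_def m_def[symmetric] using dens_meas
      by (simp add: emeasure_density)
    also have "\<dots> = (\<integral>\<^sup>+x. ennreal x \<partial>\<mu>) / m"
      by (rule nn_integral_divide) (simp add: mmu)
    also have "\<dots> = 1" using m0 mfin unfolding m_def mean_nn_def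
      by (simp add: ennreal_divide_self)
    finally show "emeasure \<nu> (space \<nu>) = 1" .
  qed
  define M where "M = \<rho> \<Otimes>\<^sub>M (\<nu> \<Otimes>\<^sub>M \<mu>)"
  have sM: "sets M = sets (borel \<Otimes>\<^sub>M (borel \<Otimes>\<^sub>M borel))"
    unfolding M_def using assms(2) snu smu by (intro sets_pair_measure_cong) auto
  have mM: "measurable M N = measurable (borel \<Otimes>\<^sub>M (borel \<Otimes>\<^sub>M borel)) N" for N
    using measurable_cong_sets[OF sM refl] .
  have spM: "space M = UNIV" using sets_eq_imp_space_eq[OF sM] by (simp add: space_pair_measure)
  interpret R: prob_space \<rho> by fact
  interpret N: prob_space \<nu> by fact
  interpret U: prob_space \<mu> by fact
  interpret NU: pair_prob_space \<nu> \<mu> ..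
  have sfNU: "sigma_finite_measure (\<nu> \<Otimes>\<^sub>M \<mu>)"
    by (rule prob_space_imp_sigma_finite, rule prob_space_pair[OF Pnu Pmu])
  interpret RNU: pair_prob_space \<rho> "\<nu> \<Otimes>\<^sub>M \<mu>"
    by (intro pair_prob_space.intro pair_sigma_finite.intro prob_space_imp_sigma_finite prob_space_pair Pnu Pmu assms(1))

  have hmeas: "(\<lambda>(a, x, y). a * x + y) \<in> borel_measurable M"
    unfolding measurable_cong_sets[OF sM refl] by measurable
  define c where "c = (\<integral>\<^sup>+x. ennreal (x powr p) \<partial>\<nu>)"
  define F where "F = (\<lambda>(a::real, x::real, y::real). ennreal ((a * x + y) powr p))"
  define G1 where "G1 = (\<lambda>(a::real, x::real, y::real). ennreal (a powr p) * ennreal (x powr p))"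
  define G2 where "G2 = (\<lambda>(a::real, x::real, y::real). ennreal ((a * x + y) powr p - (a * x) powr p))"
  have Fm: "F \<in> borel_measurable M" unfolding F_def measurable_cong_sets[OF sM refl] by measurable
  have G1m: "G1 \<in> borel_measurable M" unfolding G1_def measurable_cong_sets[OF sM refl] by measurable
  have G2m: "G2 \<in> borel_measurable M" unfolding G2_def measurable_cong_sets[OF sM refl] by measurable
  have c1: "c = integral\<^sup>N M F"
  proof -
    have "c = (\<integral>\<^sup>+x. ennreal (x powr p) \<partial>(distr M borel (\<lambda>(a, x, y). a * x + y)))"
      unfolding c_def M_def eq ..
    also have "\<dots> = integral\<^sup>N M F"
      by (subst nn_integral_distr[OF hmeas]) (auto simp: F_def intro!: nn_integral_cong split: prod.splits)
    finally show ?thesis .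
  qed
  have AEnu: "AE x in \<nu>. 0 \<le> x"
    unfolding \<nu>_def size_biased_def using dens_meas AEmu m_def
    by (subst AE_density) (auto elim: AE_mp)
  have sNU: "sets (\<nu> \<Otimes>\<^sub>M \<mu>) = sets (borel \<Otimes>\<^sub>M borel)" using snu smu by (intro sets_pair_measure_cong) auto
  have AENU: "AE y in \<nu> \<Otimes>\<^sub>M \<mu>. 0 \<le> fst y \<and> 0 \<le> snd y"
  proof (rule NU.AE_pair_measure)
    have "{x \<in> space (borel \<Otimes>\<^sub>M borel). 0 \<le> fst x \<and> 0 \<le> snd (x::real\<times>real)} \<in> sets (borel \<Otimes>\<^sub>M borel)"
      by measurable
    then show "{x \<in> space (\<nu> \<Otimes>\<^sub>M \<mu>). 0 \<le> fst x \<and> 0 \<le> snd x} \<in> sets (\<nu> \<Otimes>\<^sub>M \<mu>)"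
      using sNU sets_eq_imp_space_eq[OF sNU] by simp
    show "AE x in \<nu>. AE y in \<mu>. 0 \<le> fst (x, y) \<and> 0 \<le> snd (x, y)"
      using AEnu AEmu by (auto elim!: AE_mp)
  qed
  have AEM: "AE z in M. 0 < fst z \<and> 0 \<le> fst (snd z) \<and> 0 \<le> snd (snd z)"
    unfolding M_def
  proof (rule RNU.AE_pair_measure)
    have "{x \<in> space (borel \<Otimes>\<^sub>M (borel \<Otimes>\<^sub>M borel)). 0 < fst x \<and> 0 \<le> fst (snd x) \<and> 0 \<le> snd (snd (x::real\<times>real\<times>real))} \<in> sets (borel \<Otimes>\<^sub>M (borel \<Otimes>\<^sub>M borel))"
      by measurable
    then show "{x \<in> space (\<rho> \<Otimes>\<^sub>M (\<nu> \<Otimes>\<^sub>M \<mu>)). 0 < fst x \<and> 0 \<le> fst (snd x) \<and> 0 \<le> snd (snd x)}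
      \<in> sets (\<rho> \<Otimes>\<^sub>M (\<nu> \<Otimes>\<^sub>M \<mu>))" using sM sets_eq_imp_space_eq[OF sM] unfolding M_def by simp
    show "AE x in \<rho>. AE y in \<nu> \<Otimes>\<^sub>M \<mu>. 0 < fst (x, y) \<and> 0 \<le> fst (snd (x, y)) \<and> 0 \<le> snd (snd (x, y))"
      using assms(3) AENU by (auto elim!: AE_mp)
  qed
  have FG: "integral\<^sup>N M F = integral\<^sup>N M G1 + integral\<^sup>N M G2"
  proof -
    have "integral\<^sup>N M F = (\<integral>\<^sup>+z. G1 z + G2 z \<partial>M)"
      using AEM assms(5) by (intro nn_integral_cong_AE) (auto elim!: AE_mp simp: F_def G1_def G2_def pw_split split: prod.splits)
    also have "\<dots> = integral\<^sup>N M G1 + integral\<^sup>N M G2"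
      by (rule nn_integral_add[OF G1m G2m])
    finally show ?thesis .
  qed
  have fstM: "(\<integral>\<^sup>+z. g (snd z) \<partial>M) = integral\<^sup>N (\<nu> \<Otimes>\<^sub>M \<mu>) g" if "g \<in> borel_measurable (\<nu> \<Otimes>\<^sub>M \<mu>)" for g
  proof -
    have "(\<integral>\<^sup>+z. g (snd z) \<partial>M) = (\<integral>\<^sup>+a. \<integral>\<^sup>+w. g (snd (a, w)) \<partial>(\<nu> \<Otimes>\<^sub>M \<mu>) \<partial>\<rho>)"
      unfolding M_def using that by (subst sigma_finite_measure.nn_integral_fst[OF sfNU]) (auto simp: split_beta')
    also have "\<dots> = integral\<^sup>N (\<nu> \<Otimes>\<^sub>M \<mu>) g" by (simp add: R.emeasure_space_1)
    finally show ?thesis .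
  qed
  have fstNU: "(\<integral>\<^sup>+w. k (fst w) \<partial>(\<nu> \<Otimes>\<^sub>M \<mu>)) = integral\<^sup>N \<nu> k" if "k \<in> borel_measurable \<nu>" for k
  proof -
    have "(\<integral>\<^sup>+w. k (fst w) \<partial>(\<nu> \<Otimes>\<^sub>M \<mu>)) = (\<integral>\<^sup>+x. \<integral>\<^sup>+y. k (fst (x, y)) \<partial>\<mu> \<partial>\<nu>)"
      using that by (subst U.nn_integral_fst) auto
    also have "\<dots> = integral\<^sup>N \<nu> k" by (simp add: U.emeasure_space_1)
    finally show ?thesis .
  qed
  have sndNU: "(\<integral>\<^sup>+w. k (snd w) \<partial>(\<nu> \<Otimes>\<^sub>M \<mu>)) = integral\<^sup>N \<mu> k" if "k \<in> borel_measurable \<mu>" for k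
  proof -
    have "(\<integral>\<^sup>+w. k (snd w) \<partial>(\<nu> \<Otimes>\<^sub>M \<mu>)) = (\<integral>\<^sup>+x. \<integral>\<^sup>+y. k (snd (x, y)) \<partial>\<mu> \<partial>\<nu>)"
      using that by (subst U.nn_integral_fst) auto
    also have "\<dots> = integral\<^sup>N \<mu> k" by (simp add: N.emeasure_space_1)
    finally show ?thesis .
  qed
  define E where "E = (\<integral>\<^sup>+ a. ennreal (a powr p) \<partial>\<rho>)"
  have G1c: "integral\<^sup>N M G1 = E * c"
  proof -
    have "integral\<^sup>N M G1 = (\<integral>\<^sup>+a. \<integral>\<^sup>+w. G1 (a, w) \<partial>(\<nu> \<Otimes>\<^sub>M \<mu>) \<partial>\<rho>)"
      unfolding M_def using G1m M_def by (subst sigma_finite_measure.nn_integral_fst[OF sfNU]) auto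
    also have "\<dots> = (\<integral>\<^sup>+a. ennreal (a powr p) * c \<partial>\<rho>)"
    proof (rule nn_integral_cong)
      fix a :: real
      have "(\<integral>\<^sup>+w. G1 (a, w) \<partial>(\<nu> \<Otimes>\<^sub>M \<mu>)) = (\<integral>\<^sup>+w. ennreal (a powr p) * ennreal (fst w powr p) \<partial>(\<nu> \<Otimes>\<^sub>M \<mu>))"
        by (simp add: G1_def split_beta')
      also have "\<dots> = ennreal (a powr p) * (\<integral>\<^sup>+w. ennreal (fst w powr p) \<partial>(\<nu> \<Otimes>\<^sub>M \<mu>))"
        by (rule nn_integral_cmult) (simp add: measurable_cong_sets[OF sNU refl])
      also have "\<dots> = ennreal (a powr p) * c"
        unfolding c_def by (subst fstNU) (auto simp: mnu)
      finally show "(\<integral>\<^sup>+w. G1 (a, w) \<partial>(\<nu> \<Otimes>\<^sub>M \<mu>)) = ennreal (a powr p) * c" .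
    qed
    also have "\<dots> = E * c" unfolding E_def by (rule nn_integral_multc) (simp add: mrho)
    finally show ?thesis .
  qed
  have cfin: "c < \<infinity>"
  proof -
    have "c = (\<integral>\<^sup>+x. ennreal x / m * ennreal (x powr p) \<partial>\<mu>)"
      unfolding c_def \<nu>_def size_biased_def m_def[symmetric] using dens_meas
      by (subst nn_integral_density) (auto simp: mmu)
    also have "\<dots> = (\<integral>\<^sup>+x. ennreal (x powr (p + 1)) * inverse m \<partial>\<mu>)"
    proof (rule nn_integral_cong_AE)
      show "AE x in \<mu>. ennreal x / m * ennreal (x powr p) = ennreal (x powr (p + 1)) * inverse m"
        using AEmu
      proof (rule AE_mp, intro AE_I2 impI)
        fix x :: real assume "0 \<le> x"
        then have "x powr (p + 1) = x * x powr p"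
          by (cases "x = 0") (auto simp: powr_add)
        then have e: "ennreal (x powr (p + 1)) = ennreal x * ennreal (x powr p)"
          using \<open>0 \<le> x\<close> by (simp add: ennreal_mult)
        show "ennreal x / m * ennreal (x powr p) = ennreal (x powr (p + 1)) * inverse m"
          unfolding e divide_ennreal_def by (simp add: ac_simps)
      qed
    qed
    also have "\<dots> = (\<integral>\<^sup>+x. ennreal (x powr (p + 1)) \<partial>\<mu>) * inverse m"
      by (rule nn_integral_multc) (simp add: mmu)
    also have "\<dots> < \<infinity>"
    proof -
      have i: "inverse m < top" using m0 by (simp add: less_top[symmetric])
      show ?thesis using assms(6) i unfolding infinity_ennreal_def ennreal_mult_less_top by simp
    qed
    finally show ?thesis .
  qed
  have G2pos: "0 < integral\<^sup>N M G2"
  proof (rule ccontr)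
    assume "\<not> 0 < integral\<^sup>N M G2"
    then have "integral\<^sup>N M G2 = 0" by (simp add: zero_less_iff_neq_zero)
    then have AEG2: "AE z in M. G2 z = 0" using nn_integral_0_iff_AE[OF G2m] by simp
    have key: "ennreal (snd (snd z)) = 0"
      if h1: "0 < fst z \<and> 0 \<le> fst (snd z) \<and> 0 \<le> snd (snd z)" and h2: "G2 z = 0" for z
    proof -
      obtain a x y where z: "z = (a, x, y)" by (cases z) auto
      show ?thesis
      proof (rule ccontr)
        assume "ennreal (snd (snd z)) \<noteq> 0"
        then have "\<not> y \<le> 0" using z ennreal_eq_0_iff[of y] by simp
        then have "0 < y" by simp
        then have "0 < (a * x + y) powr p - (a * x) powr p" using pw_pos h1 z assms(5) by simp
        then show False using h2 z by (simp add: G2_def)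
      qed
    qed
    have AE0: "AE z in M. ennreal (snd (snd z)) = 0"
      using AEM AEG2 by eventually_elim (rule key)
    have Hm: "(\<lambda>z. ennreal (snd (snd z))) \<in> borel_measurable M"
      unfolding measurable_cong_sets[OF sM refl] by measurable
    have "(\<integral>\<^sup>+z. ennreal (snd (snd z)) \<partial>M) = 0" using AE0 nn_integral_0_iff_AE[OF Hm] by simp
    moreover have "(\<integral>\<^sup>+z. ennreal (snd (snd z)) \<partial>M) = m"
      unfolding m_def mean_nn_def
      by (subst fstM[of "\<lambda>w. ennreal (snd w)"], simp add: measurable_cong_sets[OF sNU refl])
         (subst sndNU, auto simp: mmu)
    ultimately show False using m0 by simp
  qed
  have "c = E * c + integral\<^sup>N M G2" using c1 FG G1c by simp
  from ennreal_final[OF this cfin G2pos] show ?thesis unfolding E_def .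
qed
end
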